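(* Let $\mathcal{C}$ be a binary linear LRC code of length $n$, locality $r$ and minimum distance $d$. Then $$\dim(\mathcal{C})\le\min_{1\le s\le n/(r+1)}\big(sr+\log_2M(n-s(r+1),d,r)\big),$$ where $M(m,d,r)$ is the maximum cardinality of a binary linear LRC code of length $m$, minimum distance $d$ and locality $r$. Consequently, $$R^{(\mathrm{lin})}(r,\delta)\le\min_{0\le\sigma<1/(r+1)}\Big\{\sigma r+(1-\sigma(r+1))\,R^{(\mathrm{lin})}\Big(r,\frac{\delta}{1-\sigma(r+1)}\Big)\Big\}.$$
   Context: A binary code $\mathcal{C}\subseteq\{0,1\}^n$ is an LRC code with locality $r$ if every coordinate $i\in[n]$ is contained in a subset $\mathcal{R}_i\subseteq[n]$ of size $r+1$ such that for some function $\phi_i:\{0,1\}^r\to\{0,1\}$, $c_i=\phi_i(c_{j_1},\dots,c_{j_r})$ for every codeword $c$, where $j_1<\dots<j_r$ are the elements of $\mathcal{R}_i\setminus\{i\}$. Let $M^{(\mathrm{lin})}(n,r,d)$ be the maximum cardinality of a binary linear code of length $n$, minimum Hamming distance $d$ and locality $r$, and $R^{(\mathrm{lin})}(r,\delta)=\limsup_{n\to\infty}\frac1n\log_2M^{(\mathrm{lin})}(n,r,\delta n)$. *)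

theory Defs
  imports "HOL-Analysis.Analysis"
begin

text \<open>Binary words of length n are boolean lists of length n; addition over GF(2) is xor.\<close>

definition hdist :: "bool list \<Rightarrow> bool list \<Rightarrow> nat" where
  "hdist x y = card {i. i < length x \<and> x ! i \<noteq> y ! i}"

definition is_binary_linear_code :: "nat \<Rightarrow> bool list set \<Rightarrow> bool" where
  "is_binary_linear_code n C \<longleftrightarrow>
     C \<subseteq> {x. length x = n} \<and> replicate n False \<in> C \<and>
     (\<forall>x\<in>C. \<forall>y\<in>C. map2 (\<lambda>a b. a \<noteq> b) x y \<in> C)"

definition has_locality :: "nat \<Rightarrow> nat \<Rightarrow> bool list set \<Rightarrow> bool" where
  "has_locality n r C \<longleftrightarrow>
     (\<forall>i<n. \<exists>R. i \<in> R \<and> R \<subseteq> {..<n} \<and> card R \<le> r + 1 \<and>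
        (\<exists>\<phi> :: bool list \<Rightarrow> bool. \<forall>c\<in>C.
            c ! i = \<phi> (map (\<lambda>j. c ! j) (sorted_list_of_set (R - {i})))))"

definition min_dist_ge :: "nat \<Rightarrow> bool list set \<Rightarrow> bool" where
  "min_dist_ge d C \<longleftrightarrow> (\<forall>x\<in>C. \<forall>y\<in>C. x \<noteq> y \<longrightarrow> d \<le> hdist x y)"

definition is_lin_LRC :: "nat \<Rightarrow> nat \<Rightarrow> nat \<Rightarrow> bool list set \<Rightarrow> bool" where
  "is_lin_LRC n r d C \<longleftrightarrow> is_binary_linear_code n C \<and> has_locality n r C \<and> min_dist_ge d C"

definition Mlin :: "nat \<Rightarrow> nat \<Rightarrow> nat \<Rightarrow> nat" where
  "Mlin n r d = Max (card ` {C. is_lin_LRC n r d C})"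

text \<open>R^(lin)(r,delta) = limsup (1/n) log2 M^(lin)(n, r, delta n); distance \<ge> delta n
  is the same as distance \<ge> ceiling(delta n).\<close>
definition Rlin :: "nat \<Rightarrow> real \<Rightarrow> ereal" where
  "Rlin r \<delta> = limsup (\<lambda>n. ereal (log 2 (real (Mlin n r (nat \<lceil>\<delta> * real n\<rceil>))) / real n))"

end

theory Submission
  imports Defs
begin

lemma dep_imp:
  assumes "\<forall>c\<in>C. c!i = \<phi> (map (\<lambda>j. c!j) xs)" "c\<in>C" "c'\<in>C" "\<forall>j\<in>set xs. c!j = c'!j"
  shows "c!i = c'!i"
proof -
  have "map (\<lambda>j. c!j) xs = map (\<lambda>j. c'!j) xs" using assms(4) by simp
  then show ?thesis using assms(1-3) by metis
qed

lemma dep_intro: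
  assumes "\<forall>c\<in>C. \<forall>c'\<in>C. (\<forall>j\<in>set xs. c!j = c'!j) \<longrightarrow> c!i = c'!i"
  shows "\<exists>\<phi>. \<forall>c\<in>C. c!i = \<phi> (map (\<lambda>j. c!j) xs)"
proof
  let ?\<phi> = "\<lambda>v. (SOME c. c\<in>C \<and> map (\<lambda>j. c!j) xs = v) ! i"
  show "\<forall>c\<in>C. c!i = ?\<phi> (map (\<lambda>j. c!j) xs)"
  proof
    fix c assume c: "c\<in>C"
    define c' where "c' = (SOME c'. c'\<in>C \<and> map (\<lambda>j. c'!j) xs = map (\<lambda>j. c!j) xs)"
    have "\<exists>c'. c'\<in>C \<and> map (\<lambda>j. c'!j) xs = map (\<lambda>j. c!j) xs" using c by blast
    then have h: "c'\<in>C \<and> map (\<lambda>j. c'!j) xs = map (\<lambda>j. c!j) xs"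
      unfolding c'_def by (rule someI_ex)
    then have "\<forall>j\<in>set xs. c!j = c'!j" by (simp add: map_eq_conv)
    then have "c!i = c'!i" using assms c h by blast
    then show "c!i = ?\<phi> (map (\<lambda>j. c!j) xs)" unfolding c'_def by simp
  qed
qed

lemma shorten:
  assumes L: "is_lin_LRC n r d C" and nr: "r+1 \<le> n"
  shows "\<exists>C'. is_lin_LRC (n-(r+1)) r d C' \<and> card C \<le> 2^r * card C'"
proof -
  have lin: "C \<subseteq> {x. length x = n}" "replicate n False \<in> C"
    "\<forall>x\<in>C. \<forall>y\<in>C. map2 (\<lambda>a b. a \<noteq> b) x y \<in> C"
    using L unfolding is_lin_LRC_def is_binary_linear_code_def by auto
  have loc: "has_locality n r C" and md: "min_dist_ge d C" using L unfolding is_lin_LRC_def by auto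
  have lenC: "\<And>x. x \<in> C \<Longrightarrow> length x = n" using lin(1) by auto
  have finC: "finite C"
  proof (rule finite_subset[OF lin(1)])
    have "finite {xs. set xs \<subseteq> (UNIV::bool set) \<and> length xs = n}"
      by (rule finite_lists_length_eq) simp
    then show "finite {x::bool list. length x = n}" by simp
  qed
  have dep: "\<forall>i<n. \<exists>R. i \<in> R \<and> R \<subseteq> {..<n} \<and> card R \<le> r+1 \<and>
      (\<forall>c\<in>C. \<forall>c'\<in>C. (\<forall>j\<in>R-{i}. c!j = c'!j) \<longrightarrow> c!i = c'!i)"
  proof (intro allI impI)
    fix i assume "i<n"
    obtain R \<phi> where R: "i\<in>R" "R \<subseteq> {..<n}" "card R \<le> r+1" and
      \<phi>: "\<forall>c\<in>C. c ! i = \<phi> (map (\<lambda>j. c ! j) (sorted_list_of_set (R - {i})))"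
      using loc[unfolded has_locality_def, rule_format, OF \<open>i<n\<close>] by (elim exE conjE) blast
    have fin: "finite (R - {i})" using R(2) finite_subset by blast
    have "\<forall>c\<in>C. \<forall>c'\<in>C. (\<forall>j\<in>R-{i}. c!j = c'!j) \<longrightarrow> c!i = c'!i"
    proof (intro ballI impI)
      fix c c' assume "c\<in>C" "c'\<in>C" "\<forall>j\<in>R-{i}. c!j = c'!j"
      then show "c!i = c'!i" using dep_imp[OF \<phi>, of c c'] fin by simp
    qed
    then show "\<exists>R. i \<in> R \<and> R \<subseteq> {..<n} \<and> card R \<le> r+1 \<and>
      (\<forall>c\<in>C. \<forall>c'\<in>C. (\<forall>j\<in>R-{i}. c!j = c'!j) \<longrightarrow> c!i = c'!i)" using R by blast
  qed
  obtain R where R: "0 \<in> R" "R \<subseteq> {..<n}" "card R \<le> r+1" and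
    Rdep: "\<forall>c\<in>C. \<forall>c'\<in>C. (\<forall>j\<in>R-{0}. c!j = c'!j) \<longrightarrow> c!0 = c'!0"
    using dep[rule_format, of 0] nr by auto
  have finR: "finite R" using R(2) finite_subset by blast
  obtain T where T: "T \<subseteq> {..<n} - R" "card T = r+1 - card R" "finite T"
  proof -
    have "r+1 - card R \<le> card ({..<n} - R)" using card_Diff_subset[OF finR R(2)] R(3) nr by simp
    then show ?thesis using obtain_subset_with_card_n that by metis
  qed
  define S where "S = R \<union> T"
  have S: "R \<subseteq> S" "S \<subseteq> {..<n}" "0 \<in> S" "finite S" using T R finR unfolding S_def by auto
  have cardS: "card S = r+1" unfolding S_def using T R finR
    by (subst card_Un_disjoint) auto
  define L where "L = sorted_list_of_set (S - {0})"
  have setL: "set L = S - {0}" and lenL: "length L = r" unfolding L_def using S cardS by auto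
  define C0 where "C0 = {c\<in>C. \<forall>j\<in>S-{0}. c!j = False}"
  define z where "z = replicate n False"
  have zC: "z \<in> C" using lin z_def by simp
  have fib: "card {c\<in>C. map (\<lambda>j. c!j) L = v} \<le> card C0" if v: "v \<in> (\<lambda>c. map (\<lambda>j. c!j) L) ` C" for v
  proof -
    obtain c0 where c0: "c0 \<in> C" "v = map (\<lambda>j. c0!j) L" using v by blast
    let ?F = "{c\<in>C. map (\<lambda>j. c!j) L = v}"
    have "inj_on (\<lambda>x. map2 (\<lambda>a b. a \<noteq> b) x c0) ?F"
    proof (rule inj_onI)
      fix x y assume x: "x \<in> ?F" and y: "y \<in> ?F" and e: "map2 (\<lambda>a b. a \<noteq> b) x c0 = map2 (\<lambda>a b. a \<noteq> b) y c0"
      have lx: "length x = n" "length y = n" "length c0 = n" using x y c0 lenC by auto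
      show "x = y"
      proof (rule nth_equalityI)
        show "length x = length y" using lx by simp
        fix j assume "j < length x"
        then have "map2 (\<lambda>a b. a \<noteq> b) x c0 ! j = map2 (\<lambda>a b. a \<noteq> b) y c0 ! j" using e by simp
        then show "x!j = y!j" using lx \<open>j < length x\<close> by auto
      qed
    qed
    moreover have "(\<lambda>x. map2 (\<lambda>a b. a \<noteq> b) x c0) ` ?F \<subseteq> C0"
    proof
      fix w assume "w \<in> (\<lambda>x. map2 (\<lambda>a b. a \<noteq> b) x c0) ` ?F"
      then obtain x where x: "x \<in> C" "map (\<lambda>j. x!j) L = v" and w: "w = map2 (\<lambda>a b. a \<noteq> b) x c0" by blast
      have lx: "length x = n" "length c0 = n" using x c0 lenC by auto
      have "w \<in> C" using lin(3) x c0 w by blast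
      moreover have "\<forall>j\<in>S-{0}. w!j = False"
      proof
        fix j assume j: "j \<in> S-{0}"
        then have "j < n" using S by auto
        have "x!j = c0!j" using x(2) c0(2) j setL by (simp add: map_eq_conv)
        then show "w!j = False" using w lx \<open>j<n\<close> by simp
      qed
      ultimately show "w \<in> C0" unfolding C0_def by blast
    qed
    moreover have "finite C0" unfolding C0_def using finC by simp
    ultimately show ?thesis using card_inj_on_le by blast
  qed
  have imgcard: "card ((\<lambda>c. map (\<lambda>j. c!j) L) ` C) \<le> 2^r"
  proof -
    have "(\<lambda>c. map (\<lambda>j. c!j) L) ` C \<subseteq> {xs. set xs \<subseteq> (UNIV::bool set) \<and> length xs = r}"
      using lenL by auto
    moreover have "card {xs. set xs \<subseteq> (UNIV::bool set) \<and> length xs = r} = 2^r"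
      using card_lists_length_eq[of "UNIV::bool set" r] by simp
    moreover have "finite {xs. set xs \<subseteq> (UNIV::bool set) \<and> length xs = r}"
      by (rule finite_lists_length_eq) simp
    ultimately show ?thesis by (metis card_mono)
  qed
  have claimA: "card C \<le> 2^r * card C0"
  proof -
    let ?P = "\<lambda>c. map (\<lambda>j. c!j) L"
    have eqC: "C = (\<Union>v\<in>?P ` C. {c\<in>C. ?P c = v})" by auto
    have "card (\<Union>v\<in>?P ` C. {c\<in>C. ?P c = v}) \<le> (\<Sum>v\<in>?P ` C. card {c\<in>C. ?P c = v})"
      by (rule card_UN_le) (use finC in simp)
    then have "card C \<le> (\<Sum>v\<in>?P ` C. card {c\<in>C. ?P c = v})"
      by (simp only: eqC[symmetric])
    also have "\<dots> \<le> (\<Sum>v\<in>?P ` C. card C0)" by (rule sum_mono) (rule fib)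
    also have "\<dots> = card (?P ` C) * card C0" by simp
    also have "\<dots> \<le> 2^r * card C0" using imgcard by simp
    finally show ?thesis .
  qed
  have claimB: "\<forall>j\<in>S. c!j = False" if c: "c \<in> C0" for c
  proof
    fix j assume j: "j \<in> S"
    show "c!j = False"
    proof (cases "j = 0")
      case False then show ?thesis using c j unfolding C0_def by auto
    next
      case True
      have cC: "c \<in> C" using c unfolding C0_def by auto
      have "\<forall>l\<in>R-{0}. c!l = z!l"
      proof
        fix l assume l: "l \<in> R-{0}"
        then have "l < n" "l \<in> S - {0}" using R S by auto
        then show "c!l = z!l" using c unfolding C0_def z_def by auto
      qed
      then have "c!0 = z!0" using Rdep cC zC by blast
      then show ?thesis using True nr unfolding z_def by simp
    qed
  qed
  define K where "K = sorted_list_of_set ({..<n} - S)"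
  have setK: "set K = {..<n} - S" and distK: "distinct K" unfolding K_def by auto
  have lenK: "length K = n - (r+1)" unfolding K_def using card_Diff_subset[OF S(4) S(2)] cardS by simp
  have Kn: "\<And>k. k < length K \<Longrightarrow> K!k < n \<and> K!k \<notin> S" using setK nth_mem by fastforce
  define pr where "pr = (\<lambda>c::bool list. map (\<lambda>j. c!j) K)"
  define C' where "C' = pr ` C0"
  have injpr: "inj_on pr C0"
  proof (rule inj_onI)
    fix x y assume x: "x \<in> C0" and y: "y \<in> C0" and e: "pr x = pr y"
    have lx: "length x = n" "length y = n" using x y lenC unfolding C0_def by auto
    show "x = y"
    proof (rule nth_equalityI)
      show "length x = length y" using lx by simp
      fix j assume "j < length x"
      show "x!j = y!j"
      proof (cases "j \<in> S")
        case True then show ?thesis using claimB x y by simp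
      next
        case False
        then have "j \<in> set K" using setK \<open>j < length x\<close> lx by auto
        then show ?thesis using e unfolding pr_def by (simp add: map_eq_conv)
      qed
    qed
  qed
  have cardC': "card C' = card C0" unfolding C'_def using injpr by (simp add: card_image)
  have C0C: "C0 \<subseteq> C" unfolding C0_def by auto
  have lenpr: "\<And>c. length (pr c) = n - (r+1)" unfolding pr_def using lenK by simp
  have nthpr: "\<And>c k. k < length K \<Longrightarrow> pr c ! k = c ! (K!k)" unfolding pr_def by simp
  have linC': "is_binary_linear_code (n-(r+1)) C'"
    unfolding is_binary_linear_code_def
  proof (intro conjI)
    show "C' \<subseteq> {x. length x = n - (r+1)}" unfolding C'_def using lenpr by auto
    have "z \<in> C0" unfolding C0_def z_def using zC z_def S by auto
    moreover have "pr z = replicate (n-(r+1)) False"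
      by (rule nth_equalityI) (use lenpr lenK nthpr Kn in \<open>auto simp: z_def\<close>)
    ultimately show "replicate (n-(r+1)) False \<in> C'" unfolding C'_def by force
    show "\<forall>x\<in>C'. \<forall>y\<in>C'. map2 (\<lambda>a b. a \<noteq> b) x y \<in> C'"
    proof (intro ballI)
      fix x' y' assume "x' \<in> C'" "y' \<in> C'"
      then obtain x y where x: "x \<in> C0" "x' = pr x" and y: "y \<in> C0" "y' = pr y" unfolding C'_def by blast
      have lx: "length x = n" "length y = n" using x y lenC C0C by auto
      let ?w = "map2 (\<lambda>a b. a \<noteq> b) x y"
      have "?w \<in> C" using lin(3) x y C0C by blast
      moreover have "\<forall>j\<in>S-{0}. ?w!j = False"
      proof
        fix j assume "j \<in> S-{0}"
        then have "j < n" "j \<in> S" using S by auto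
        then show "?w!j = False" using claimB x y lx by simp
      qed
      ultimately have wC0: "?w \<in> C0" unfolding C0_def by blast
      have "pr ?w = map2 (\<lambda>a b. a \<noteq> b) x' y'"
        by (rule nth_equalityI) (use lenpr lenK nthpr Kn lx x y in auto)
      then show "map2 (\<lambda>a b. a \<noteq> b) x' y' \<in> C'" using wC0 unfolding C'_def by force
    qed
  qed
  have mdC': "min_dist_ge d C'"
    unfolding min_dist_ge_def
  proof (intro ballI impI)
    fix x' y' assume "x' \<in> C'" "y' \<in> C'" and ne: "x' \<noteq> y'"
    then obtain x y where x: "x \<in> C0" "x' = pr x" and y: "y \<in> C0" "y' = pr y" unfolding C'_def by blast
    have lx: "length x = n" "length y = n" using x y lenC C0C by auto
    have "x \<noteq> y" using ne x y by auto
    then have dxy: "d \<le> hdist x y" using md x y C0C unfolding min_dist_ge_def by blast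
    let ?A = "{k. k < length K \<and> x!(K!k) \<noteq> y!(K!k)}"
    have eqset: "{j. j < length x \<and> x!j \<noteq> y!j} = (\<lambda>k. K!k) ` ?A"
    proof
      show "{j. j < length x \<and> x!j \<noteq> y!j} \<subseteq> (\<lambda>k. K!k) ` ?A"
      proof
        fix j assume j: "j \<in> {j. j < length x \<and> x!j \<noteq> y!j}"
        then have "j \<notin> S" using claimB x y by auto
        then have "j \<in> set K" using setK j lx by auto
        then obtain k where "k < length K" "j = K!k" by (metis in_set_conv_nth)
        then show "j \<in> (\<lambda>k. K!k) ` ?A" using j by auto
      qed
      show "(\<lambda>k. K!k) ` ?A \<subseteq> {j. j < length x \<and> x!j \<noteq> y!j}" using Kn lx by auto
    qed
    have "inj_on (\<lambda>k. K!k) ?A" using inj_on_nth[OF distK, of ?A] by auto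
    then have "card ?A = hdist x y" unfolding hdist_def eqset by (simp add: card_image)
    moreover have "hdist x' y' = card ?A" unfolding hdist_def x y using lenpr lenK nthpr
      by (metis (no_types, lifting))
    ultimately show "d \<le> hdist x' y'" using dxy by simp
  qed
  have locC': "has_locality (n-(r+1)) r C'"
    unfolding has_locality_def
  proof (intro allI impI)
    fix k assume k: "k < n-(r+1)"
    then have kK: "k < length K" using lenK by simp
    define j where "j = K!k"
    have jn: "j < n" "j \<notin> S" using Kn kK j_def by auto
    obtain Rj where Rj: "j \<in> Rj" "Rj \<subseteq> {..<n}" "card Rj \<le> r+1" and
      Rjdep: "\<forall>c\<in>C. \<forall>c'\<in>C. (\<forall>l\<in>Rj-{j}. c!l = c'!l) \<longrightarrow> c!j = c'!j"
      using dep[rule_format, OF jn(1)] by blast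
    have finRj: "finite Rj" using Rj(2) finite_subset by blast
    define R' where "R' = {k'. k' < length K \<and> K!k' \<in> Rj}"
    have kR': "k \<in> R'" using kK Rj j_def R'_def by simp
    have R'sub: "R' \<subseteq> {..<n-(r+1)}" using lenK R'_def by auto
    have injR': "inj_on (\<lambda>k. K!k) R'" using inj_on_nth[OF distK, of R'] R'_def by auto
    have "card R' = card ((\<lambda>k. K!k) ` R')" using injR' by (simp add: card_image)
    also have "\<dots> \<le> card Rj" using finRj R'_def by (intro card_mono) auto
    finally have cR': "card R' \<le> r+1" using Rj by simp
    have finR': "finite (R' - {k})" using R'sub finite_subset by blast
    have "\<forall>c\<in>C'. \<forall>c'\<in>C'. (\<forall>i\<in>set (sorted_list_of_set (R' - {k})). c!i = c'!i) \<longrightarrow> c!k = c'!k"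
    proof (intro ballI impI)
      fix x' y' assume "x' \<in> C'" "y' \<in> C'" and ag0: "\<forall>i\<in>set (sorted_list_of_set (R' - {k})). x'!i = y'!i"
      then obtain x y where x: "x \<in> C0" "x' = pr x" and y: "y \<in> C0" "y' = pr y" unfolding C'_def by blast
      have ag: "\<forall>i\<in>R'-{k}. x'!i = y'!i" using ag0 finR' by simp
      have "\<forall>l\<in>Rj-{j}. x!l = y!l"
      proof
        fix l assume l: "l \<in> Rj-{j}"
        show "x!l = y!l"
        proof (cases "l \<in> S")
          case True then show ?thesis using claimB x y by simp
        next
          case False
          then have "l \<in> set K" using setK l Rj by auto
          then obtain k' where k': "k' < length K" "l = K!k'" by (metis in_set_conv_nth)
          have "k' \<in> R' - {k}" using k' l j_def R'_def by auto
          then have "x'!k' = y'!k'" using ag by blast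
          then show ?thesis using x y nthpr k' by simp
        qed
      qed
      then have "x!j = y!j" using Rjdep x y C0C by blast
      then show "x'!k = y'!k" using x y nthpr kK j_def by simp
    qed
    then have "\<exists>\<phi>. \<forall>c\<in>C'. c!k = \<phi> (map (\<lambda>i. c!i) (sorted_list_of_set (R' - {k})))"
      by (rule dep_intro)
    then show "\<exists>R. k \<in> R \<and> R \<subseteq> {..<n-(r+1)} \<and> card R \<le> r + 1 \<and>
        (\<exists>\<phi>. \<forall>c\<in>C'. c ! k = \<phi> (map (\<lambda>j. c ! j) (sorted_list_of_set (R - {k}))))"
      using kR' R'sub cR' by blast
  qed
  have "is_lin_LRC (n-(r+1)) r d C'" unfolding is_lin_LRC_def using linC' mdC' locC' by blast
  moreover have "card C \<le> 2^r * card C'" using claimA cardC' by simp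
  ultimately show ?thesis by blast
qed


lemma finite_len: "finite {x::bool list. length x = m}"
proof -
  have "finite {xs. set xs \<subseteq> (UNIV::bool set) \<and> length xs = m}"
    by (rule finite_lists_length_eq) simp
  then show ?thesis by simp
qed

lemma card_len: "card {x::bool list. length x = m} = 2^m"
  using card_lists_length_eq[of "UNIV::bool set" m] by simp

lemma LRC_sub: "is_lin_LRC m r d C \<Longrightarrow> C \<subseteq> {x. length x = m}"
  unfolding is_lin_LRC_def is_binary_linear_code_def by auto

lemma LRC_card_pos: "is_lin_LRC m r d C \<Longrightarrow> 1 \<le> card C"
proof -
  assume a: "is_lin_LRC m r d C"
  then have "replicate m False \<in> C" unfolding is_lin_LRC_def is_binary_linear_code_def by auto
  moreover have "finite C" using LRC_sub[OF a] finite_len finite_subset by blast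
  ultimately show ?thesis by (metis One_nat_def Suc_leI card_gt_0_iff empty_iff)
qed

lemma LRC_card_le: "is_lin_LRC m r d C \<Longrightarrow> card C \<le> 2^m"
  using LRC_sub card_len finite_len by (metis card_mono)

lemma zero_LRC: "is_lin_LRC m r d {replicate m False}"
  unfolding is_lin_LRC_def is_binary_linear_code_def has_locality_def min_dist_ge_def
proof (intro conjI allI impI)
  fix i assume "i < m"
  then show "\<exists>R. i \<in> R \<and> R \<subseteq> {..<m} \<and> card R \<le> r + 1 \<and>
     (\<exists>\<phi>. \<forall>c\<in>{replicate m False}. c ! i = \<phi> (map ((!) c) (sorted_list_of_set (R - {i}))))"
    by (intro exI[of _ "{i}"] conjI exI[of _ "\<lambda>_. False"]) auto
qed (auto simp: map2_map_map[symmetric])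

lemma finite_codes: "finite {C. is_lin_LRC m r d C}"
proof -
  have "{C. is_lin_LRC m r d C} \<subseteq> Pow {x. length x = m}" using LRC_sub by blast
  then show ?thesis using finite_len by (metis finite_Pow_iff finite_subset)
qed

lemma Mlin_ge: "is_lin_LRC m r d C \<Longrightarrow> card C \<le> Mlin m r d"
  unfolding Mlin_def using finite_codes by (intro Max_ge) auto

lemma Mlin_attained: "\<exists>C. is_lin_LRC m r d C \<and> card C = Mlin m r d"
proof -
  have "Mlin m r d \<in> card ` {C. is_lin_LRC m r d C}"
    unfolding Mlin_def
  proof (intro Max_in finite_imageI finite_codes)
    show "card ` {C. is_lin_LRC m r d C} \<noteq> {}" using zero_LRC[of m r d] by blast
  qed
  then show ?thesis by auto
qed

lemma Mlin_pos: "1 \<le> Mlin m r d"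
  using Mlin_attained LRC_card_pos by metis

lemma Mlin_le: "Mlin m r d \<le> 2^m"
  using Mlin_attained LRC_card_le by metis

lemma Mlin_mono: "d1 \<le> d2 \<Longrightarrow> Mlin m r d2 \<le> Mlin m r d1"
proof -
  assume "d1 \<le> d2"
  obtain C where "is_lin_LRC m r d2 C" "card C = Mlin m r d2" using Mlin_attained by blast
  then have "is_lin_LRC m r d1 C" using \<open>d1 \<le> d2\<close>
    unfolding is_lin_LRC_def min_dist_ge_def by fastforce
  then show ?thesis using Mlin_ge \<open>card C = _\<close> by metis
qed

lemma iter: "is_lin_LRC n r d C \<Longrightarrow> s*(r+1) \<le> n \<Longrightarrow> card C \<le> 2^(s*r) * Mlin (n - s*(r+1)) r d"
proof (induction s arbitrary: n C)
  case 0
  then show ?case using Mlin_ge by simp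
next
  case (Suc s)
  then have "r+1 \<le> n" by simp
  then obtain C' where C': "is_lin_LRC (n-(r+1)) r d C'" "card C \<le> 2^r * card C'"
    using shorten Suc.prems by blast
  have "s*(r+1) \<le> n - (r+1)" using Suc.prems by simp
  then have "card C' \<le> 2^(s*r) * Mlin (n-(r+1) - s*(r+1)) r d" using Suc.IH C' by blast
  moreover have "n-(r+1) - s*(r+1) = n - Suc s*(r+1)" by simp
  ultimately have "card C' \<le> 2^(s*r) * Mlin (n - Suc s*(r+1)) r d" by simp
  then have "2^r * card C' \<le> 2^r * (2^(s*r) * Mlin (n - Suc s*(r+1)) r d)" by simp
  also have "\<dots> = 2^(Suc s * r) * Mlin (n - Suc s*(r+1)) r d" by (simp add: power_add)
  finally show ?case using C' by simp
qed

lemma part1: "is_lin_LRC n r d C \<Longrightarrow> s*(r+1) \<le> n \<Longrightarrow>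
   log 2 (real (card C)) \<le> real (s * r) + log 2 (real (Mlin (n - s * (r + 1)) r d))"
proof -
  assume a: "is_lin_LRC n r d C" "s*(r+1) \<le> n"
  have "real (card C) \<le> 2 ^ (s*r) * real (Mlin (n - s*(r+1)) r d)"
    using iter[OF a] by (metis of_nat_le_iff of_nat_mult of_nat_numeral of_nat_power)
  moreover have "0 < real (card C)" using LRC_card_pos[OF a(1)] by simp
  ultimately have "log 2 (real (card C)) \<le> log 2 (2 ^ (s*r) * real (Mlin (n - s*(r+1)) r d))"
    by simp
  also have "\<dots> = real (s*r) + log 2 (real (Mlin (n - s*(r+1)) r d))"
    using Mlin_pos[of "n - s*(r+1)" r d] by (simp add: log_mult log_nat_power)
  finally show ?thesis .
qed


lemma g_bounds: "0 \<le> log 2 (real (Mlin m r d)) / real m \<and> log 2 (real (Mlin m r d)) / real m \<le> 1"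
proof -
  have p: "1 \<le> real (Mlin m r d)" using Mlin_pos[of m r d] by simp
  have "real (Mlin m r d) \<le> 2 ^ m" using Mlin_le[of m r d]
    by (metis of_nat_le_iff of_nat_numeral of_nat_power)
  then have u1: "log 2 (real (Mlin m r d)) \<le> log 2 (2 ^ m)" using p
    by (subst log_le_cancel_iff) auto
  have u2: "log 2 ((2::real) ^ m) = real m" by (simp add: log_nat_power)
  have u: "log 2 (real (Mlin m r d)) \<le> real m" using u1 u2 by simp
  have l: "0 \<le> log 2 (real (Mlin m r d))" using p by simp
  show ?thesis
  proof (cases "m = 0")
    case True then show ?thesis by simp
  next
    case False
    then show ?thesis using u l by (simp add: divide_simps)
  qed
qed

lemma log_eq: "log 2 (real (Mlin m r d)) = real m * (log 2 (real (Mlin m r d)) / real m)"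
proof (cases "m = 0")
  case True
  then have "Mlin m r d = 1" using Mlin_pos[of m r d] Mlin_le[of m r d] by simp
  then show ?thesis using True by simp
qed simp

lemma part2:
  fixes r :: nat and \<delta> \<sigma> :: real
  assumes d0: "0 \<le> \<delta>" and s0: "0 \<le> \<sigma>" and s1: "\<sigma> < 1 / real (r + 1)"
  shows "Rlin r \<delta> \<le> ereal (\<sigma> * real r)
                 + ereal (1 - \<sigma> * real (r + 1)) * Rlin r (\<delta> / (1 - \<sigma> * real (r + 1)))"
proof -
  define \<tau> where "\<tau> = 1 - \<sigma> * real (r + 1)"
  have tpos: "0 < \<tau>" using s1 unfolding \<tau>_def by (simp add: field_simps)
  have tle: "\<tau> \<le> 1" using s0 unfolding \<tau>_def by simp
  define \<delta>' where "\<delta>' = \<delta> / \<tau>"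
  define g where "g = (\<lambda>m. log 2 (real (Mlin m r (nat \<lceil>\<delta>' * real m\<rceil>))) / real m)"
  have R2: "Rlin r \<delta>' = limsup (\<lambda>m. ereal (g m))" unfolding Rlin_def g_def by simp
  have "Rlin r \<delta>' \<le> 1" unfolding R2
    by (rule Limsup_bounded) (use g_bounds in \<open>auto simp: g_def\<close>)
  moreover have "0 \<le> Rlin r \<delta>'" unfolding R2
    by (rule le_Limsup) (use g_bounds in \<open>auto simp: g_def\<close>)
  ultimately obtain \<rho> where rho: "Rlin r \<delta>' = ereal \<rho>" "0 \<le> \<rho>"
    by (cases "Rlin r \<delta>'") auto
  have rhs: "ereal (\<sigma> * real r) + ereal \<tau> * Rlin r \<delta>' = ereal (\<sigma> * real r + \<tau> * \<rho>)"
    using rho by simp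
  have main: "Rlin r \<delta> \<le> ereal (\<sigma> * real r + \<tau> * \<rho>)"
  proof (rule ereal_le_epsilon2)
    fix e :: real assume e: "0 < e"
    define \<epsilon> where "\<epsilon> = e / 2"
    have ep: "0 < \<epsilon>" using e unfolding \<epsilon>_def by simp
    have "limsup (\<lambda>m. ereal (g m)) < ereal (\<rho> + \<epsilon>)"
    proof -
      have "limsup (\<lambda>m. ereal (g m)) = ereal \<rho>" using R2 rho by simp
      then show ?thesis using ep by simp
    qed
    then have "eventually (\<lambda>m. ereal (g m) < ereal (\<rho> + \<epsilon>)) sequentially" by (rule Limsup_lessD)
    then obtain M where M: "\<And>m. M \<le> m \<Longrightarrow> g m < \<rho> + \<epsilon>" unfolding eventually_sequentially by auto
    define N where "N = nat \<lceil>(real M + real r + 1) / \<tau> + real r / \<epsilon>\<rceil> + 1"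
    have bound: "log 2 (real (Mlin n r (nat \<lceil>\<delta> * real n\<rceil>))) / real n \<le> \<sigma> * real r + \<tau> * \<rho> + e"
      if nN: "N \<le> n" for n
    proof -
      have nbig: "(real M + real r + 1) / \<tau> + real r / \<epsilon> < real n" using nN unfolding N_def by linarith
      have rpos: "0 \<le> real r / \<epsilon>" using ep by simp
      have "0 \<le> (real M + real r + 1) / \<tau>" using tpos by simp
      then have n1: "real r / \<epsilon> < real n" "(real M + real r + 1) / \<tau> < real n" using nbig rpos by linarith+
      then have n2: "real M + real r + 1 < \<tau> * real n" using tpos by (simp add: field_simps)
      have npos: "0 < real n" using n1 rpos by linarith
      have n3: "real r \<le> \<epsilon> * real n" using n1 ep by (simp add: field_simps)
      define s where "s = nat \<lceil>\<sigma> * real n\<rceil>"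
      have sr: "real s = of_int \<lceil>\<sigma> * real n\<rceil>" unfolding s_def using s0 by simp
      have sl: "\<sigma> * real n \<le> real s" "real s \<le> \<sigma> * real n + 1" unfolding sr by linarith+
      have "real s * real (r+1) \<le> (\<sigma> * real n + 1) * real (r+1)" using sl by (intro mult_right_mono) auto
      also have "\<dots> = real n - \<tau> * real n + real (r+1)" unfolding \<tau>_def by (simp add: algebra_simps)
      finally have sr1: "real s * real (r+1) \<le> real n - \<tau> * real n + real (r+1)" .
      have sn: "s * (r+1) \<le> n"
      proof -
        have "real s * real (r+1) \<le> real n" using sr1 n2 by simp
        then show ?thesis by (metis of_nat_le_iff of_nat_mult)
      qed
      define m where "m = n - s * (r+1)"
      have mr: "real m = real n - real s * real (r+1)" unfolding m_def using sn by (simp add: of_nat_diff algebra_simps)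
      have mM: "M \<le> m"
      proof -
        have "real M \<le> real m" using mr sr1 n2 by simp
        then show ?thesis by simp
      qed
      have "\<sigma> * real n * real (r+1) \<le> real s * real (r+1)" using sl by (intro mult_right_mono) auto
      then have mt: "real m \<le> \<tau> * real n" using mr unfolding \<tau>_def by (simp add: algebra_simps)
      have dd: "nat \<lceil>\<delta>' * real m\<rceil> \<le> nat \<lceil>\<delta> * real n\<rceil>"
      proof -
        have "\<delta>' * real m \<le> \<delta>' * (\<tau> * real n)" using mt d0 tpos unfolding \<delta>'_def by (intro mult_left_mono) auto
        also have "\<dots> = \<delta> * real n" unfolding \<delta>'_def using tpos by simp
        finally show ?thesis by (intro nat_mono ceiling_mono)
      qed
      obtain C where C: "is_lin_LRC n r (nat \<lceil>\<delta> * real n\<rceil>) C" "card C = Mlin n r (nat \<lceil>\<delta> * real n\<rceil>)"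
        using Mlin_attained by blast
      have "log 2 (real (Mlin n r (nat \<lceil>\<delta> * real n\<rceil>))) \<le> real (s*r) + log 2 (real (Mlin m r (nat \<lceil>\<delta> * real n\<rceil>)))"
        using part1[OF C(1) sn] C(2) unfolding m_def by simp
      also have "log 2 (real (Mlin m r (nat \<lceil>\<delta> * real n\<rceil>))) \<le> log 2 (real (Mlin m r (nat \<lceil>\<delta>' * real m\<rceil>)))"
        using Mlin_mono[OF dd, of m r] Mlin_pos[of m r "nat \<lceil>\<delta> * real n\<rceil>"] by simp
      also have "\<dots> = real m * g m" unfolding g_def by (rule log_eq)
      also have "real m * g m \<le> real m * (\<rho> + \<epsilon>)" using M[OF mM] by (intro mult_left_mono) auto
      also have "real m * (\<rho> + \<epsilon>) \<le> \<tau> * real n * (\<rho> + \<epsilon>)" using mt rho ep by (intro mult_right_mono) auto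
      finally have "log 2 (real (Mlin n r (nat \<lceil>\<delta> * real n\<rceil>))) \<le> real s * real r + \<tau> * real n * (\<rho> + \<epsilon>)"
        by simp
      also have "\<dots> \<le> (\<sigma> * real n + 1) * real r + \<tau> * real n * (\<rho> + \<epsilon>)"
        using sl by (simp add: mult_right_mono)
      also have "\<dots> = \<sigma> * real r * real n + real r + \<tau> * \<rho> * real n + \<tau> * \<epsilon> * real n"
        by (simp add: algebra_simps)
      also have "\<dots> \<le> \<sigma> * real r * real n + \<epsilon> * real n + \<tau> * \<rho> * real n + \<epsilon> * real n"
      proof -
        have "\<tau> * \<epsilon> * real n \<le> 1 * \<epsilon> * real n" using tle ep npos
          by (intro mult_right_mono) auto
        then show ?thesis using n3 by simp
      qed
      also have "\<dots> = (\<sigma> * real r + \<tau> * \<rho> + e) * real n" unfolding \<epsilon>_def by (simp add: algebra_simps)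
      finally show ?thesis using npos by (simp add: divide_simps)
    qed
    have "Rlin r \<delta> \<le> ereal (\<sigma> * real r + \<tau> * \<rho> + e)"
      unfolding Rlin_def
      by (rule Limsup_bounded) (use bound in \<open>auto simp: eventually_sequentially\<close>)
    then show "Rlin r \<delta> \<le> ereal (\<sigma> * real r + \<tau> * \<rho>) + ereal e" by simp
  qed
  show ?thesis using main rhs unfolding \<tau>_def \<delta>'_def by simp
qed

theorem theorem7:
  shows "(\<forall>(n::nat) (r::nat) (d::nat) (C::bool list set) (s::nat).
            is_lin_LRC n r d C \<longrightarrow> 1 \<le> s \<longrightarrow> s * (r + 1) \<le> n \<longrightarrow>
            log 2 (real (card C)) \<le> real (s * r) + log 2 (real (Mlin (n - s * (r + 1)) r d)))
       \<and> (\<forall>(r::nat) (\<delta>::real) (\<sigma>::real).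
            0 \<le> \<delta> \<longrightarrow> \<delta> \<le> 1 \<longrightarrow> 0 \<le> \<sigma> \<longrightarrow> \<sigma> < 1 / real (r + 1) \<longrightarrow>
            Rlin r \<delta> \<le> ereal (\<sigma> * real r)
                 + ereal (1 - \<sigma> * real (r + 1)) * Rlin r (\<delta> / (1 - \<sigma> * real (r + 1))))"
  proof (intro conjI allI impI)
  fix n r d :: nat and C :: "bool list set" and s :: nat
  assume a: "is_lin_LRC n r d C" "1 \<le> s" "s * (r + 1) \<le> n"
  show "log 2 (real (card C)) \<le> real (s * r) + log 2 (real (Mlin (n - s * (r + 1)) r d))"
    by (rule part1[OF a(1) a(3)])
next
  fix r :: nat and \<delta> \<sigma> :: real
  assume b: "0 \<le> \<delta>" "\<delta> \<le> 1" "0 \<le> \<sigma>" "\<sigma> < 1 / real (r + 1)"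
  show "Rlin r \<delta> \<le> ereal (\<sigma> * real r)
                 + ereal (1 - \<sigma> * real (r + 1)) * Rlin r (\<delta> / (1 - \<sigma> * real (r + 1)))"
    by (rule part2[OF b(1) b(3) b(4)])
qed

end
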